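(* For all integers $p,q\geq 3$, $\mathrm{mbt}(K_p\Box C_q)=\Delta(K_p\Box C_q)+1$, where $K_p$ is the complete graph on $p$ vertices and $C_q$ is the cycle on $q$ vertices.
   Context: A book embedding of a graph $G$ consists of a linear ordering of $V(G)$ (the vertices placed on the spine) together with an assignment of each edge to one of a set of pages such that no two edges on the same page cross, i.e. there are no two edges $uv$, $xy$ on the same page with $u<x<v<y$ in the ordering. A book embedding is matching if on every page each vertex is incident with at most one edge of that page (the edges of each page form a matching). The matching book thickness $\mathrm{mbt}(G)$ is the minimum number of pages over all matching book embeddings of $G$. $\Delta(G)$ denotes the maximum degree of $G$. The Cartesian product $G\Box B$ has vertex set $V(G)\times V(B)$, with $(u_1,v_1)$ adjacent to $(u_2,v_2)$ iff either $u_1=u_2$ and $v_1v_2\in E(B)$, or $v_1=v_2$ and $u_1u_2\in E(G)$. *)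

theory Defs
  imports Main
begin

type_synonym 'a graph = "'a set \<times> 'a set set"

definition verts :: "'a graph \<Rightarrow> 'a set" where "verts G = fst G"
definition edges :: "'a graph \<Rightarrow> 'a set set" where "edges G = snd G"

definition simple_graph :: "'a graph \<Rightarrow> bool" where
  "simple_graph G \<longleftrightarrow> finite (verts G) \<and>
     (\<forall>e\<in>edges G. e \<subseteq> verts G \<and> card e = 2)"

definition degree :: "'a graph \<Rightarrow> 'a \<Rightarrow> nat" where
  "degree G v = card {e \<in> edges G. v \<in> e}"

definition max_degree :: "'a graph \<Rightarrow> nat" where
  "max_degree G = Max (degree G ` verts G)"

definition crossing :: "('a \<Rightarrow> nat) \<Rightarrow> 'a set \<Rightarrow> 'a set \<Rightarrow> bool" where
  "crossing ord e f \<longleftrightarrow> (\<exists>u v x y. e = {u, v} \<and> f = {x, y} \<and>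
      ord u < ord x \<and> ord x < ord v \<and> ord v < ord y)"

definition matching_book_embedding ::
    "'a graph \<Rightarrow> nat \<Rightarrow> ('a \<Rightarrow> nat) \<Rightarrow> ('a set \<Rightarrow> nat) \<Rightarrow> bool" where
  "matching_book_embedding G k ord page \<longleftrightarrow>
     inj_on ord (verts G) \<and>
     (\<forall>e\<in>edges G. page e < k) \<and>
     (\<forall>e\<in>edges G. \<forall>f\<in>edges G. page e = page f \<longrightarrow> \<not> crossing ord e f) \<and>
     (\<forall>e\<in>edges G. \<forall>f\<in>edges G. page e = page f \<longrightarrow> e \<noteq> f \<longrightarrow> e \<inter> f = {})"

definition mbt :: "'a graph \<Rightarrow> nat" where
  "mbt G = (LEAST k. \<exists>ord page. matching_book_embedding G k ord page)"

definition complete_graph :: "nat \<Rightarrow> nat graph" where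
  "complete_graph p = ({0..<p}, {{i, j} | i j. i < p \<and> j < p \<and> i \<noteq> j})"

definition cycle_graph :: "nat \<Rightarrow> nat graph" where
  "cycle_graph q = ({0..<q}, {{i, (i + 1) mod q} | i. i < q})"

definition cart_prod :: "'a graph \<Rightarrow> 'b graph \<Rightarrow> ('a \<times> 'b) graph" where
  "cart_prod G B = (verts G \<times> verts B,
     {{(u, v1), (u, v2)} | u v1 v2. u \<in> verts G \<and> {v1, v2} \<in> edges B} \<union>
     {{(u1, v), (u2, v)} | u1 u2 v. v \<in> verts B \<and> {u1, u2} \<in> edges G})"

end

theory Submission
  imports Defs
begin



lemma A1:
  fixes x1 x2 x3 x4 n k :: nat
  assumes "x1 < x3" "x3 < x2" "x2 < x4" "x4 < n" "(x1 + x2 + k) mod n = (x3 + x4 + k) mod n"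
  shows False
proof -
  have le: "x1 + x2 + k \<le> x3 + x4 + k" using assms by simp
  have "n dvd (x3 + x4 + k) - (x1 + x2 + k)" using assms(5)[symmetric] mod_eq_dvd_iff_nat[OF le] by blast
  moreover have "0 < (x3 + x4 + k) - (x1 + x2 + k)" "(x3 + x4 + k) - (x1 + x2 + k) < n" using assms by auto
  ultimately show False using nat_dvd_not_less by blast
qed

lemma A2:
  fixes x y u p :: nat
  assumes "x < u" "u < y" "y < p" "(x + y + 1) mod (Suc p) = u"
  shows False
proof (cases "x + y + 1 \<le> p")
  case True
  hence "(x + y + 1) mod (Suc p) = x + y + 1" by simp
  thus False using assms by simp
next
  case False
  hence ge: "Suc p \<le> x + y + 1" by simp
  have "(x + y + 1) mod (Suc p) = (x + y + 1 - Suc p) mod Suc p" using le_mod_geq[OF ge] .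
  also have "\<dots> = x + y + 1 - Suc p" using assms by (intro mod_less) simp
  finally have "(x + y + 1) mod (Suc p) = x + y + 1 - Suc p" .
  thus False using assms by simp
qed

lemma A3:
  fixes x y c n :: nat
  assumes "x < n" "y < n" "(c + x) mod n = (c + y) mod n"
  shows "x = y"
proof (rule ccontr)
  assume ne: "x \<noteq> y"
  { fix a b :: nat assume ab: "a < b" "b < n" "(c + a) mod n = (c + b) mod n"
    have le: "c + a \<le> c + b" using ab by simp
    have "n dvd (c + b) - (c + a)" using ab(3)[symmetric] mod_eq_dvd_iff_nat[OF le] by blast
    moreover have "0 < (c + b) - (c + a)" "(c + b) - (c + a) < n" using ab by auto
    ultimately have False using nat_dvd_not_less by blast }
  thus False using assms ne by (metis linorder_neqE_nat)
qed




lemma even_between: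
  assumes fin: "finite (verts G)"
    and two: "\<forall>e\<in>edges G. e \<subseteq> verts G \<and> card e = 2"
    and mbe: "matching_book_embedding G k ord page"
    and full: "\<forall>x\<in>verts G. \<forall>i<k. \<exists>f\<in>edges G. x \<in> f \<and> page f = i"
    and e: "{a,b} \<in> edges G" and ab: "ord a < ord b"
  shows "even (card {x \<in> verts G. ord a < ord x \<and> ord x < ord b})"
proof -
  define S where "S = {x \<in> verts G. ord a < ord x \<and> ord x < ord b}"
  define C where "C = {f \<in> edges G. page f = page {a,b} \<and> f \<subseteq> S}"
  have injo: "inj_on ord (verts G)" and pk: "\<forall>e\<in>edges G. page e < k"
    and nc: "\<forall>e\<in>edges G. \<forall>f\<in>edges G. page e = page f \<longrightarrow> \<not> crossing ord e f"
    and mt: "\<forall>e\<in>edges G. \<forall>f\<in>edges G. page e = page f \<longrightarrow> e \<noteq> f \<longrightarrow> e \<inter> f = {}"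
    using mbe unfolding matching_book_embedding_def by auto
  have abV: "a \<in> verts G" "b \<in> verts G" using two e by auto
  have finS: "finite S" using fin unfolding S_def by auto
  have SC: "S = \<Union>C"
  proof
    show "\<Union>C \<subseteq> S" unfolding C_def by auto
    show "S \<subseteq> \<Union>C"
    proof
      fix x assume xS: "x \<in> S"
      hence xV: "x \<in> verts G" and ox: "ord a < ord x" "ord x < ord b" unfolding S_def by auto
      have "page {a,b} < k" using pk e by auto
      then obtain f where f: "f \<in> edges G" "x \<in> f" "page f = page {a,b}" using full xV by blast
      have xab: "x \<noteq> a" "x \<noteq> b" using ox by auto
      have fne: "f \<noteq> {a,b}" using f xab by auto
      have disj: "f \<inter> {a,b} = {}" using mt f e fne by metis
      have "card f = 2" "f \<subseteq> verts G" using two f by auto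
      then obtain y1 y2 where f12: "f = {y1,y2}" "y1 \<noteq> y2" by (meson card_2_iff)
      obtain y where fy: "f = {x,y}" using f12 f(2) by auto
      have yV: "y \<in> verts G" using fy \<open>f \<subseteq> verts G\<close> by auto
      have yab: "y \<noteq> a" "y \<noteq> b" using disj fy by auto
      have oya: "ord y \<noteq> ord a" using injo yV abV yab by (meson inj_on_contraD)
      have oyb: "ord y \<noteq> ord b" using injo yV abV yab by (meson inj_on_contraD)
      have "\<not> crossing ord f {a,b}" "\<not> crossing ord {a,b} f" using nc f e by auto
      hence "\<not> (ord y < ord a)" "\<not> (ord b < ord y)"
        unfolding crossing_def using fy ox by (metis insert_commute)+
      hence "y \<in> S" unfolding S_def using oya oyb yV by auto
      hence "f \<subseteq> S" using fy xS by auto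
      hence "f \<in> C" unfolding C_def using f by auto
      thus "x \<in> \<Union>C" using f by auto
    qed
  qed
  have CP: "C \<subseteq> Pow S" unfolding C_def by blast
  have finC: "finite C" using finS CP finite_subset by blast
  have pw: "pairwise disjnt C"
    unfolding pairwise_def disjnt_def C_def using mt by auto
  have finA: "\<And>A. A \<in> C \<Longrightarrow> finite A" using CP finS finite_subset by blast
  have "card S = sum card C" using SC card_Union_disjoint[OF pw finA] by simp
  also have "\<dots> = sum (\<lambda>_. 2) C" using two unfolding C_def by (intro sum.cong) auto
  also have "\<dots> = 2 * card C" by simp
  finally show ?thesis unfolding S_def by simp
qed

lemma no_triangle_ordered:
  assumes fin: "finite (verts G)"
    and two: "\<forall>e\<in>edges G. e \<subseteq> verts G \<and> card e = 2"
    and mbe: "matching_book_embedding G k ord page"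
    and full: "\<forall>x\<in>verts G. \<forall>i<k. \<exists>f\<in>edges G. x \<in> f \<and> page f = i"
    and e1: "{x,y} \<in> edges G" and e2: "{y,z} \<in> edges G" and e3: "{x,z} \<in> edges G"
    and o: "ord x < ord y" "ord y < ord z"
  shows False
proof -
  have yV: "y \<in> verts G" using two e1 by auto
  define S where "S = (\<lambda>a b. {w \<in> verts G. ord a < ord w \<and> ord w < ord b})"
  have fS: "\<And>a b. finite (S a b)" unfolding S_def using fin by auto
  have inj: "inj_on ord (verts G)" using mbe unfolding matching_book_embedding_def by auto
  have neq: "\<And>w. w \<in> verts G \<Longrightarrow> w \<noteq> y \<Longrightarrow> ord w \<noteq> ord y"
    using inj yV by (meson inj_on_contraD)
  have eq: "S x z = S x y \<union> ({y} \<union> S y z)" unfolding S_def using o yV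
    apply auto
    using neq linorder_neqE_nat by blast
  have "card (S x z) = card (S x y) + card ({y} \<union> S y z)"
    unfolding eq by (rule card_Un_disjoint) (use fS in \<open>auto simp: S_def\<close>)
  also have "card ({y} \<union> S y z) = Suc (card (S y z))"
    using fS by (simp add: S_def)
  finally have c: "card (S x z) = card (S x y) + Suc (card (S y z))" .
  have "even (card (S x z))" "even (card (S x y))" "even (card (S y z))"
    unfolding S_def using even_between[OF fin two mbe full] e1 e2 e3 o by (auto intro: less_trans)
  thus False using c by simp
qed

lemma no_triangle:
  assumes fin: "finite (verts G)"
    and two: "\<forall>e\<in>edges G. e \<subseteq> verts G \<and> card e = 2"
    and mbe: "matching_book_embedding G k ord page"
    and full: "\<forall>x\<in>verts G. \<forall>i<k. \<exists>f\<in>edges G. x \<in> f \<and> page f = i"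
    and e1: "{x,y} \<in> edges G" and e2: "{y,z} \<in> edges G" and e3: "{x,z} \<in> edges G"
    and d: "x \<noteq> y" "y \<noteq> z" "x \<noteq> z"
  shows False
proof -
  have V: "x \<in> verts G" "y \<in> verts G" "z \<in> verts G" using two e1 e2 by auto
  have inj: "inj_on ord (verts G)" using mbe unfolding matching_book_embedding_def by auto
  have n: "ord x \<noteq> ord y" "ord y \<noteq> ord z" "ord x \<noteq> ord z"
    using inj V d by (meson inj_on_contraD)+
  note T = no_triangle_ordered[OF fin two mbe full]
  have E: "\<And>a b. a \<in> {x,y,z} \<Longrightarrow> b \<in> {x,y,z} \<Longrightarrow> a \<noteq> b \<Longrightarrow> {a,b} \<in> edges G"
    using e1 e2 e3 by (auto simp: insert_commute)
  have T2: "\<And>a b c. a \<in> {x,y,z} \<Longrightarrow> b \<in> {x,y,z} \<Longrightarrow> c \<in> {x,y,z} \<Longrightarrow> ord a < ord b \<Longrightarrow> ord b < ord c \<Longrightarrow> False"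
  proof -
    fix a b c assume abc: "a \<in> {x,y,z}" "b \<in> {x,y,z}" "c \<in> {x,y,z}" and o: "ord a < ord b" "ord b < ord c"
    have "a \<noteq> b" "b \<noteq> c" "a \<noteq> c" using o by auto
    thus False using T[OF E E E o] abc by auto
  qed
  show False
  proof (cases "ord x < ord y")
    case True
    then show ?thesis using T2[of x y z] T2[of x z y] T2[of z x y] n by (auto simp: linorder_neq_iff)
  next
    case False
    then show ?thesis using T2[of y x z] T2[of y z x] T2[of z y x] n by (auto simp: linorder_neq_iff)
  qed
qed

lemma lower_bound_generic:
  assumes fin: "finite (verts G)"
    and two: "\<forall>e\<in>edges G. e \<subseteq> verts G \<and> card e = 2"
    and mbe: "matching_book_embedding G k ord page"
    and deg: "\<forall>x\<in>verts G. card {e \<in> edges G. x \<in> e} = d"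
    and e1: "{x,y} \<in> edges G" and e2: "{y,z} \<in> edges G" and e3: "{x,z} \<in> edges G"
    and dd: "x \<noteq> y" "y \<noteq> z" "x \<noteq> z"
  shows "d + 1 \<le> k"
proof (rule ccontr)
  assume "\<not> d + 1 \<le> k"
  hence kd: "k \<le> d" by simp
  have EP: "edges G \<subseteq> Pow (verts G)" using two by blast
  have finE: "finite (edges G)" using finite_subset[OF EP] fin by simp
  have pk: "\<forall>e\<in>edges G. page e < k"
    and mt: "\<forall>e\<in>edges G. \<forall>f\<in>edges G. page e = page f \<longrightarrow> e \<noteq> f \<longrightarrow> e \<inter> f = {}"
    using mbe unfolding matching_book_embedding_def by auto
  have full: "\<forall>x\<in>verts G. \<forall>i<k. \<exists>f\<in>edges G. x \<in> f \<and> page f = i"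
  proof (intro ballI allI impI)
    fix x i assume xV: "x \<in> verts G" and ik: "i < k"
    define I where "I = {e \<in> edges G. x \<in> e}"
    have finI: "finite I" using finE unfolding I_def by auto
    have injI: "inj_on page I"
      unfolding inj_on_def I_def using mt by blast
    have sub: "page ` I \<subseteq> {..<k}" using pk unfolding I_def by auto
    have "card (page ` I) = d" using card_image[OF injI] deg xV unfolding I_def by simp
    hence "card {..<k} \<le> card (page ` I)" using kd by simp
    hence "page ` I = {..<k}" using card_seteq[OF _ sub] by simp
    hence "i \<in> page ` I" using ik by auto
    thus "\<exists>f\<in>edges G. x \<in> f \<and> page f = i" unfolding I_def by auto
  qed
  show False using no_triangle[OF fin two mbe full e1 e2 e3 dd] .
qed




definition adjc :: "nat \<Rightarrow> nat \<Rightarrow> nat \<times> nat \<Rightarrow> nat \<times> nat \<Rightarrow> bool" where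
  "adjc p q x y \<longleftrightarrow> fst x < p \<and> fst y < p \<and> snd x < q \<and> snd y < q \<and>
     ((snd x = snd y \<and> fst x \<noteq> fst y) \<or>
      (fst x = fst y \<and> (snd y = Suc (snd x) \<or> snd x = Suc (snd y) \<or>
         (snd x = 0 \<and> snd y = q - 1) \<or> (snd y = 0 \<and> snd x = q - 1))))"

lemma adjc_sym: "adjc p q x y \<Longrightarrow> adjc p q y x"
  unfolding adjc_def by auto

lemma adjc_irrefl: "q \<ge> 3 \<Longrightarrow> \<not> adjc p q x x"
  unfolding adjc_def by auto

lemma cyc_edge:
  assumes "q \<ge> 3"
  shows "{v1,v2} \<in> edges (cycle_graph q) \<longleftrightarrow> v1 < q \<and> v2 < q \<and>
     (v2 = Suc v1 \<or> v1 = Suc v2 \<or> (v1 = 0 \<and> v2 = q - 1) \<or> (v2 = 0 \<and> v1 = q - 1))"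
proof
  assume "{v1,v2} \<in> edges (cycle_graph q)"
  then obtain i where i: "i < q" "{v1,v2} = {i, (i+1) mod q}"
    unfolding edges_def cycle_graph_def by auto
  show "v1 < q \<and> v2 < q \<and>
     (v2 = Suc v1 \<or> v1 = Suc v2 \<or> (v1 = 0 \<and> v2 = q - 1) \<or> (v2 = 0 \<and> v1 = q - 1))"
  proof (cases "i + 1 < q")
    case True
    hence "(i+1) mod q = i + 1" by simp
    thus ?thesis using i True by (auto simp: doubleton_eq_iff)
  next
    case False
    hence "i + 1 = q" using i by auto
    hence "i = q - 1" "(i+1) mod q = 0" by auto
    thus ?thesis using i assms by (auto simp: doubleton_eq_iff)
  qed
next
  assume h: "v1 < q \<and> v2 < q \<and>
     (v2 = Suc v1 \<or> v1 = Suc v2 \<or> (v1 = 0 \<and> v2 = q - 1) \<or> (v2 = 0 \<and> v1 = q - 1))"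
  have E: "\<And>i. i < q \<Longrightarrow> {i, (i+1) mod q} \<in> edges (cycle_graph q)"
    unfolding edges_def cycle_graph_def by auto
  show "{v1,v2} \<in> edges (cycle_graph q)"
  proof -
    { assume "v2 = Suc v1" hence ?thesis using E[of v1] h by simp }
    moreover
    { assume "v1 = Suc v2" hence ?thesis using E[of v2] h by (simp add: insert_commute) }
    moreover
    { assume a: "v1 = 0 \<and> v2 = q - 1"
      have "(q - 1 + 1) mod q = 0" using assms by simp
      hence ?thesis using E[of "q-1"] a assms by (simp add: insert_commute) }
    moreover
    { assume a: "v2 = 0 \<and> v1 = q - 1"
      have "(q - 1 + 1) mod q = 0" using assms by simp
      hence ?thesis using E[of "q-1"] a assms by simp }
    ultimately show ?thesis using h by blast
  qed
qed

lemma comp_edge: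
  "{u1,u2} \<in> edges (complete_graph p) \<longleftrightarrow> u1 < p \<and> u2 < p \<and> u1 \<noteq> u2"
  unfolding edges_def complete_graph_def by (auto simp: doubleton_eq_iff)

abbreviation GG :: "nat \<Rightarrow> nat \<Rightarrow> (nat \<times> nat) graph" where
  "GG p q \<equiv> cart_prod (complete_graph p) (cycle_graph q)"

lemma vertsG: "verts (GG p q) = {0..<p} \<times> {0..<q}"
  unfolding cart_prod_def verts_def complete_graph_def cycle_graph_def by simp

lemma edgesG:
  assumes "q \<ge> 3"
  shows "edges (GG p q) = {{x,y} | x y. adjc p q x y}"
proof -
  have vp: "verts (complete_graph p) = {0..<p}" and vq: "verts (cycle_graph q) = {0..<q}"
    unfolding verts_def complete_graph_def cycle_graph_def by auto
  have e: "edges (GG p q) =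
     {{(u, v1), (u, v2)} | u v1 v2. u \<in> {0..<p} \<and> {v1, v2} \<in> edges (cycle_graph q)} \<union>
     {{(u1, v), (u2, v)} | u1 u2 v. v \<in> {0..<q} \<and> {u1, u2} \<in> edges (complete_graph p)}"
    unfolding cart_prod_def edges_def[of "(_,_)"] vp vq by simp
  show ?thesis
  proof
    show "edges (GG p q) \<subseteq> {{x,y} | x y. adjc p q x y}"
    proof
      fix e assume "e \<in> edges (GG p q)"
      then consider (a) u v1 v2 where "e = {(u, v1), (u, v2)}" "u < p" "{v1, v2} \<in> edges (cycle_graph q)"
        | (b) u1 u2 v where "e = {(u1, v), (u2, v)}" "v < q" "{u1, u2} \<in> edges (complete_graph p)"
        unfolding e by auto
      thus "e \<in> {{x,y} | x y. adjc p q x y}"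
      proof cases
        case a
        hence "adjc p q (u,v1) (u,v2)" unfolding adjc_def using cyc_edge[OF assms] by auto
        thus ?thesis using a by blast
      next
        case b
        hence "adjc p q (u1,v) (u2,v)" unfolding adjc_def using comp_edge by auto
        thus ?thesis using b by blast
      qed
    qed
    show "{{x,y} | x y. adjc p q x y} \<subseteq> edges (GG p q)"
    proof
      fix e assume "e \<in> {{x,y} | x y. adjc p q x y}"
      then obtain u1 v1 u2 v2 where ee: "e = {(u1,v1),(u2,v2)}" and ad: "adjc p q (u1,v1) (u2,v2)" by auto
      show "e \<in> edges (GG p q)"
      proof (cases "v1 = v2")
        case True
        hence "{u1,u2} \<in> edges (complete_graph p)" "v1 < q" using ad comp_edge assms unfolding adjc_def by auto
        hence "e = {(u1, v2), (u2, v2)} \<and> v2 \<in> {0..<q} \<and> {u1, u2} \<in> edges (complete_graph p)"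
          using ee True by simp
        hence "\<exists>u1 u2 v. e = {(u1, v), (u2, v)} \<and> v \<in> {0..<q} \<and> {u1, u2} \<in> edges (complete_graph p)"
          by blast
        thus ?thesis unfolding e by (intro UnI2 CollectI)
      next
        case False
        hence "u1 = u2" "{v1,v2} \<in> edges (cycle_graph q)" "u1 < p" using ad cyc_edge[OF assms] assms unfolding adjc_def by auto
        hence "e = {(u1, v1), (u1, v2)} \<and> u1 \<in> {0..<p} \<and> {v1, v2} \<in> edges (cycle_graph q)"
          using ee by simp
        hence "\<exists>u v1 v2. e = {(u, v1), (u, v2)} \<and> u \<in> {0..<p} \<and> {v1, v2} \<in> edges (cycle_graph q)"
          by blast
        thus ?thesis unfolding e by (intro UnI1 CollectI)
      qed
    qed
  qed
qed

lemma twoG: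
  assumes "q \<ge> 3"
  shows "\<forall>e\<in>edges (GG p q). e \<subseteq> verts (GG p q) \<and> card e = 2"
proof
  fix e assume "e \<in> edges (GG p q)"
  then obtain x y where e: "e = {x,y}" and a: "adjc p q x y" using edgesG[OF assms] by auto
  have "x \<noteq> y" using a adjc_irrefl[OF assms, of p y] by auto
  moreover have "x \<in> verts (GG p q)" "y \<in> verts (GG p q)"
    using a unfolding vertsG adjc_def by (auto simp: mem_Times_iff)
  ultimately show "e \<subseteq> verts (GG p q) \<and> card e = 2" using e by auto
qed

lemma nbset:
  assumes "q \<ge> 3" "u < p" "v < q"
  shows "{y. adjc p q (u,v) y} = (\<lambda>u'. (u',v)) ` ({0..<p} - {u}) \<union>
           {(u, if v = q - 1 then 0 else Suc v), (u, if v = 0 then q - 1 else v - 1)}"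
  using assms unfolding adjc_def by (auto split: if_splits)

lemma degG:
  assumes "q \<ge> 3" "x \<in> verts (GG p q)"
  shows "card {e \<in> edges (GG p q). x \<in> e} = p + 1"
proof -
  obtain u v where x: "x = (u,v)" "u < p" "v < q" using assms(2) unfolding vertsG by auto
  have eq: "{e \<in> edges (GG p q). x \<in> e} = (\<lambda>y. {x,y}) ` {y. adjc p q x y}"
  proof (intro set_eqI iffI)
    fix e assume "e \<in> {e \<in> edges (GG p q). x \<in> e}"
    then obtain a b where e: "e = {a,b}" "adjc p q a b" "x \<in> e" unfolding edgesG[OF assms(1)] by auto
    show "e \<in> (\<lambda>y. {x,y}) ` {y. adjc p q x y}"
    proof (cases "x = a")
      case True thus ?thesis using e by auto
    next
      case False
      hence "x = b" using e by auto
      thus ?thesis using e adjc_sym[OF e(2)] by (auto simp: insert_commute)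
    qed
  next
    fix e assume "e \<in> (\<lambda>y. {x,y}) ` {y. adjc p q x y}"
    then obtain y where "e = {x,y}" "adjc p q x y" by auto
    thus "e \<in> {e \<in> edges (GG p q). x \<in> e}" unfolding edgesG[OF assms(1)] by blast
  qed
  have inj: "inj_on (\<lambda>y. {x,y}) {y. adjc p q x y}"
    using adjc_irrefl[OF assms(1), of p] unfolding inj_on_def by (auto simp: doubleton_eq_iff)
  define a where "a = (if v = q - 1 then 0 else Suc v)"
  define b where "b = (if v = 0 then q - 1 else v - 1)"
  have ab: "a \<noteq> b" using assms(1) x unfolding a_def b_def by auto
  have fA: "finite ((\<lambda>u'. (u',v)) ` ({0..<p} - {u}))" by simp
  have cA: "card ((\<lambda>u'. (u',v)) ` ({0..<p} - {u})) = p - 1"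
    by (subst card_image) (auto simp: inj_on_def x)
  have "card {y. adjc p q x y} = card ((\<lambda>u'. (u',v)) ` ({0..<p} - {u}) \<union> {(u,a),(u,b)})"
    unfolding x(1) nbset[OF assms(1) x(2,3)] a_def b_def ..
  also have "\<dots> = (p - 1) + card {(u,a),(u,b)}"
    by (subst card_Un_disjoint) (auto simp: cA)
  also have "\<dots> = p + 1" using ab x by auto
  finally show ?thesis unfolding eq using card_image[OF inj] by simp
qed

lemma maxdegG:
  assumes "q \<ge> 3" "p \<ge> 1"
  shows "max_degree (GG p q) = p + 1"
proof -
  have ne: "verts (GG p q) \<noteq> {}" using assms unfolding vertsG by auto
  have "degree (GG p q) ` verts (GG p q) = {p + 1}"
    using degG[OF assms(1)] ne unfolding degree_def by auto
  thus ?thesis unfolding max_degree_def by simp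
qed

lemma lowerG:
  assumes "q \<ge> 3" "p \<ge> 3" "matching_book_embedding (GG p q) k ord page"
  shows "p + 2 \<le> k"
proof -
  have fin: "finite (verts (GG p q))" unfolding vertsG by simp
  have ad: "adjc p q (0,0) (1,0)" "adjc p q (1,0) (2,0)" "adjc p q (0,0) (2,0)"
    using assms unfolding adjc_def by auto
  have e: "{(0,0),(1,0)} \<in> edges (GG p q)" "{(1,0),(2,0)} \<in> edges (GG p q)" "{(0,0),(2,0)} \<in> edges (GG p q)"
    unfolding edgesG[OF assms(1)] using ad by blast+
  have "p + 1 + 1 \<le> k"
    by (rule lower_bound_generic[OF fin twoG[OF assms(1)] assms(3) _ e]) (use degG[OF assms(1)] in auto)
  thus ?thesis by simp
qed




definition sp :: "nat \<Rightarrow> nat \<Rightarrow> nat \<Rightarrow> nat" where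
  "sp p v u = (if even v then u else p - 1 - u)"

definition ordf :: "nat \<Rightarrow> nat \<times> nat \<Rightarrow> nat" where
  "ordf p x = snd x * p + sp p (snd x) (fst x)"

definition kp :: "nat \<Rightarrow> nat \<Rightarrow> nat \<Rightarrow> nat \<Rightarrow> nat \<Rightarrow> nat" where
  "kp p q v a b = (if v = 0 \<or> v = q - 1 then
      (if v = q - 1 \<and> (a + b + 1) mod (Suc p) = p \<and> odd q then Suc p else (a + b + 1) mod (Suc p))
    else (a + b) mod p)"

definition pg :: "nat \<Rightarrow> nat \<Rightarrow> nat \<times> nat \<Rightarrow> nat \<times> nat \<Rightarrow> nat" where
  "pg p q x y = (if snd x = snd y then kp p q (snd x) (fst x) (fst y)
     else if snd y = Suc (snd x) \<or> snd x = Suc (snd y) then Suc p - (min (snd x) (snd y) mod 2)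
     else min (fst x) (fst y))"

lemma sp_lt: "u < p \<Longrightarrow> sp p v u < p"
  unfolding sp_def by auto

lemma sp_inj: "u < p \<Longrightarrow> u' < p \<Longrightarrow> sp p v u = sp p v u' \<Longrightarrow> u = u'"
  unfolding sp_def by (auto split: if_splits)

lemma sp_suc: "u < p \<Longrightarrow> sp p (Suc v) u = p - 1 - sp p v u"
  unfolding sp_def by auto

lemma lex:
  fixes a b v w p :: nat
  assumes "a < p" "b < p"
  shows "(v * p + a < w * p + b) \<longleftrightarrow> (v < w \<or> (v = w \<and> a < b))"
proof -
  { fix v w a b :: nat assume "v < w" "a < p"
    hence "Suc v * p \<le> w * p" by (intro mult_le_mono1) simp
    hence "v * p + a < w * p" using \<open>a < p\<close> by simp }
  note X = this
  show ?thesis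
  proof (cases v w rule: linorder_cases)
    case less thus ?thesis using X[OF less assms(1)] by simp
  next
    case equal thus ?thesis by simp
  next
    case greater thus ?thesis using X[OF greater assms(2)] by simp
  qed
qed

lemma ord_less:
  "u < p \<Longrightarrow> u' < p \<Longrightarrow> ordf p (u,v) < ordf p (u',v') \<longleftrightarrow> v < v' \<or> (v = v' \<and> sp p v u < sp p v u')"
  unfolding ordf_def using lex[OF sp_lt sp_lt] by auto

lemma pg_sym: "pg p q x y = pg p q y x"
  unfolding pg_def kp_def by (auto simp: add.commute min.commute)

lemma pg_K: "pg p q (u1,v) (u2,v) = kp p q v u1 u2"
  unfolding pg_def by simp

lemma pg_B: "pg p q (u1,v) (u2,Suc v) = Suc p - (v mod 2)"
  unfolding pg_def by simp

lemma pg_W: "q \<ge> 3 \<Longrightarrow> pg p q (u1,0) (u2,q - 1) = min u1 u2"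
proof -
  assume "q \<ge> 3" hence "q - 1 \<noteq> Suc 0" "q - 1 \<noteq> 0" by arith+
  thus ?thesis unfolding pg_def by simp
qed

lemma kp_gadget_eq:
  assumes "v = 0 \<or> v = q - 1" "kp p q v a b = kp p q v c d"
  shows "(a + b + 1) mod (Suc p) = (c + d + 1) mod (Suc p)"
proof -
  have h: "Suc (a+b) mod Suc p \<noteq> Suc p" "Suc (c+d) mod Suc p \<noteq> Suc p"
    by (metis mod_less_divisor zero_less_Suc less_irrefl)+
  show ?thesis using assms h unfolding kp_def by (auto split: if_splits)
qed

lemma kp_lt_mid: "v \<noteq> 0 \<Longrightarrow> v \<noteq> q - 1 \<Longrightarrow> p > 0 \<Longrightarrow> kp p q v a b < p"
  unfolding kp_def by simp

lemma kp_le0: "q \<ge> 3 \<Longrightarrow> kp p q 0 a b = (a + b + 1) mod (Suc p)"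
  unfolding kp_def by simp

lemma cross_KK:
  assumes q: "q \<ge> 3" and u: "ua < p" "ub < p" "uc < p" "ud < p"
    and o: "sp p v ua < sp p v uc" "sp p v uc < sp p v ub" "sp p v ub < sp p v ud"
    and pe: "kp p q v ua ub = kp p q v uc ud"
  shows False
proof -
  have il: "(ua < uc \<and> uc < ub \<and> ub < ud) \<or> (ud < ub \<and> ub < uc \<and> uc < ua)"
    using o u unfolding sp_def by (auto split: if_splits)
  show False
  proof (cases "v = 0 \<or> v = q - 1")
    case True
    hence m: "(ua + ub + 1) mod Suc p = (uc + ud + 1) mod Suc p" using kp_gadget_eq pe by blast
    have m2: "(ud + uc + 1) mod Suc p = (ub + ua + 1) mod Suc p" using m by (metis add.commute)
    show False using il
    proof
      assume h: "ua < uc \<and> uc < ub \<and> ub < ud"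
      show False using A1[of ua uc ub ud "Suc p" 1] h u m by auto
    next
      assume h: "ud < ub \<and> ub < uc \<and> uc < ua"
      show False using A1[of ud ub uc ua "Suc p" 1] h u m2 by auto
    qed
  next
    case False
    hence m: "(ua + ub + 0) mod p = (uc + ud + 0) mod p" using pe unfolding kp_def by simp
    have m2: "(ud + uc + 0) mod p = (ub + ua + 0) mod p" using m by (metis add.commute)
    show False using il
    proof
      assume h: "ua < uc \<and> uc < ub \<and> ub < ud"
      show False using A1[of ua uc ub ud p 0] h u m by auto
    next
      assume h: "ud < ub \<and> ub < uc \<and> uc < ua"
      show False using A1[of ud ub uc ua p 0] h u m2 by auto
    qed
  qed
qed

lemma cross_KW:
  assumes q: "q \<ge> 3" and u: "ua < uc" "uc < ub" "ub < p" and pe: "kp p q 0 ua ub = uc"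
  shows False
  using A2[of ua uc ub p] u pe kp_le0[OF q] by auto

lemma cross_WK:
  assumes u: "uc < p" "ub < p" "ud < p"
    and o: "sp p (q - 1) uc < sp p (q - 1) ub" "sp p (q - 1) ub < sp p (q - 1) ud"
    and pe: "kp p q (q - 1) uc ud = ub"
  shows False
proof -
  have il: "(uc < ub \<and> ub < ud) \<or> (ud < ub \<and> ub < uc)"
    using o u unfolding sp_def by (auto split: if_splits)
  have m: "(uc + ud + 1) mod Suc p = ub" using pe u unfolding kp_def by (auto split: if_splits)
  have m2: "(ud + uc + 1) mod Suc p = ub" using m by (metis add.commute)
  show False using il A2[of uc ub ud p] A2[of ud ub uc p] m m2 u by auto
qed

lemma cross_KB:
  assumes p: "p \<ge> 1" and w: "Suc w < q" and pe: "kp p q w ua ub = Suc p - (w mod 2)"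
  shows False
proof (cases "w = 0")
  case True
  hence "kp p q w ua ub < Suc p" using w unfolding kp_def by simp
  thus False using pe True by simp
next
  case False
  hence "kp p q w ua ub < p" using w p by (intro kp_lt_mid) auto
  moreover have "Suc p - (w mod 2) \<ge> p" by simp
  ultimately show False using pe by simp
qed

lemma cross_BK:
  assumes p: "p \<ge> 1" and w: "Suc va < q" and pe: "Suc p - (va mod 2) = kp p q (Suc va) uc ud"
  shows False
proof (cases "Suc va = q - 1")
  case True
  have lt: "Suc (uc + ud) mod Suc p \<noteq> Suc p" by (metis mod_less_divisor zero_less_Suc less_irrefl)
  have par: "odd q \<longleftrightarrow> va mod 2 = 1" using True w by (auto simp: odd_iff_mod_2_eq_one) presburger+
  show False using pe True lt par unfolding kp_def by (auto split: if_splits)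
next
  case False
  hence "kp p q (Suc va) uc ud < p" using p by (intro kp_lt_mid) auto
  moreover have "Suc p - (va mod 2) \<ge> p" by simp
  ultimately show False using pe by simp
qed

lemma cross_BB:
  assumes u: "ua < p" "uc < p" and le: "va \<le> vc" "vc \<le> Suc va"
    and pe: "Suc p - (va mod 2) = Suc p - (vc mod 2)"
    and o1: "va < vc \<or> (va = vc \<and> sp p va ua < sp p va uc)"
    and o3: "Suc va < Suc vc \<or> (Suc va = Suc vc \<and> sp p (Suc va) ua < sp p (Suc va) uc)"
  shows False
proof -
  have "va mod 2 = vc mod 2" using pe by (simp add: mod2_eq_if split: if_splits)
  hence "vc \<noteq> Suc va" by presburger
  hence "vc = va" using le by auto
  hence "sp p va ua < sp p va uc" "sp p (Suc va) ua < sp p (Suc va) uc" using o1 o3 by auto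
  thus False using sp_suc[OF u(1)] sp_suc[OF u(2)] sp_lt[OF u(1)] sp_lt[OF u(2)] by simp
qed

lemma cross_free:
  assumes p: "p \<ge> 3" and q: "q \<ge> 3"
    and ab: "adjc p q (ua,va) (ub,vb)" and cd: "adjc p q (uc,vc) (ud,vd)"
    and pe: "pg p q (ua,va) (ub,vb) = pg p q (uc,vc) (ud,vd)"
    and o1: "ordf p (ua,va) < ordf p (uc,vc)" and o2: "ordf p (uc,vc) < ordf p (ub,vb)"
    and o3: "ordf p (ub,vb) < ordf p (ud,vd)"
  shows False
proof -
  have u: "ua < p" "ub < p" "uc < p" "ud < p" and v: "va < q" "vb < q" "vc < q" "vd < q"
    using ab cd unfolding adjc_def by auto
  have l1: "va < vc \<or> (va = vc \<and> sp p va ua < sp p va uc)" using o1 ord_less u by blast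
  have l2: "vc < vb \<or> (vc = vb \<and> sp p vc uc < sp p vc ub)" using o2 ord_less u by blast
  have l3: "vb < vd \<or> (vb = vd \<and> sp p vb ub < sp p vb ud)" using o3 ord_less u by blast
  have le: "va \<le> vc" "vc \<le> vb" "vb \<le> vd" using l1 l2 l3 by auto
  have q1: "q - 1 \<noteq> 0" using q by arith
  have tab: "va = vb \<or> (ua = ub \<and> vb = Suc va) \<or> (ua = ub \<and> va = 0 \<and> vb = q - 1)"
    using ab le q1 unfolding adjc_def by auto
  have tcd: "vc = vd \<or> (uc = ud \<and> vd = Suc vc) \<or> (uc = ud \<and> vc = 0 \<and> vd = q - 1)"
    using cd le q1 unfolding adjc_def by auto
  have p1: "p \<ge> 1" using p by simp
  have s0: "\<And>u. sp p 0 u = u" unfolding sp_def by simp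
  show False
  proof -
    { assume K1: "va = vb"
      { assume K2: "vc = vd"
        have e: "vc = va" "vb = va" "vd = va" using K1 K2 le by auto
        have "kp p q va ua ub = kp p q va uc ud" using pe unfolding K1[symmetric] e pg_K by simp
        hence False using cross_KK[OF q u, of va] l1 l2 l3 e by auto }
      moreover
      { assume B2: "uc = ud" "vd = Suc vc"
        have e: "vc = va" "vb = va" using K1 le by auto
        have "kp p q va ua ub = Suc p - (va mod 2)" using pe unfolding K1[symmetric] B2 e pg_K pg_B by simp
        hence False using cross_KB[OF p1, of va q ua ub] v B2 e by auto }
      moreover
      { assume W2: "uc = ud" "vc = 0" "vd = q - 1"
        have e: "va = 0" "vb = 0" using K1 le W2 by auto
        have "kp p q 0 ua ub = uc" using pe unfolding e W2 pg_K pg_W[OF q] by simp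
        hence False using cross_KW[OF q, of ua uc ub p] l1 l2 e W2 u s0 by auto }
      ultimately have False using tcd by blast }
    moreover
    { assume B1: "ua = ub" "vb = Suc va"
      { assume K2: "vc = vd"
        have e: "vc = Suc va" "vd = Suc va" using B1 K2 le by auto
        have "Suc p - (va mod 2) = kp p q (Suc va) uc ud" using pe unfolding B1 e pg_K pg_B by simp
        hence False using cross_BK[OF p1, of va q uc ud] v e by auto }
      moreover
      { assume B2: "uc = ud" "vd = Suc vc"
        have "Suc p - (va mod 2) = Suc p - (vc mod 2)" using pe unfolding B1 B2 pg_B by simp
        hence False using cross_BB[of ua p uc va vc] u le l1 l3 B1 B2 by auto }
      moreover
      { assume W2: "uc = ud" "vc = 0" "vd = q - 1"
        have "Suc p - (va mod 2) = uc" using pe unfolding B1 W2 pg_B pg_W[OF q] by simp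
        hence False using u by auto }
      ultimately have False using tcd by blast }
    moreover
    { assume W1: "ua = ub" "va = 0" "vb = q - 1"
      { assume K2: "vc = vd"
        have e: "vc = q - 1" "vd = q - 1" using W1 K2 le by auto
        have "ub = kp p q (q - 1) uc ud" using pe unfolding W1 e pg_K pg_W[OF q] by simp
        hence False using cross_WK[of uc p ub ud q] u l2 l3 e W1 by auto }
      moreover
      { assume B2: "uc = ud" "vd = Suc vc"
        have "ua = Suc p - (vc mod 2)" using pe unfolding W1 B2 pg_B pg_W[OF q] by simp
        hence False using u by auto }
      moreover
      { assume W2: "uc = ud" "vc = 0" "vd = q - 1"
        have "ua = uc" using pe unfolding W1 W2 pg_W[OF q] by simp
        hence False using l1 W1 W2 s0 by auto }
      ultimately have False using tcd by blast }
    ultimately show False using tab by blast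
  qed
qed

lemma match_KK:
  assumes "u < p" "u1 < p" "u2 < p" "kp p q v u u1 = kp p q v u u2"
  shows "u1 = u2"
proof (cases "v = 0 \<or> v = q - 1")
  case True
  hence "(u + u1 + 1) mod Suc p = (u + u2 + 1) mod Suc p" using kp_gadget_eq assms(4) by blast
  hence "(Suc u + u1) mod Suc p = (Suc u + u2) mod Suc p" by simp
  thus ?thesis using A3[of u1 "Suc p" u2 "Suc u"] assms by simp
next
  case False
  hence "(u + u1) mod p = (u + u2) mod p" using assms(4) unfolding kp_def by simp
  thus ?thesis using A3[of u1 p u2 u] assms by simp
qed

lemma match_KW:
  assumes "u < p" "u1 < p" "kp p q v u u1 = u" "v = 0 \<or> v = q - 1"
  shows False
proof -
  have "(u + u1 + 1) mod Suc p = u" using assms unfolding kp_def by (auto split: if_splits)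
  hence "(u + Suc u1) mod Suc p = (u + 0) mod Suc p" using assms by simp
  hence "Suc u1 = 0" using A3[of "Suc u1" "Suc p" 0 u] assms(2) by simp
  thus False by simp
qed

lemma matching:
  assumes p: "p \<ge> 3" and q: "q \<ge> 3"
    and a1: "adjc p q (u,v) (u1,v1)" and a2: "adjc p q (u,v) (u2,v2)"
    and pe: "pg p q (u,v) (u1,v1) = pg p q (u,v) (u2,v2)"
  shows "(u1,v1) = (u2,v2)"
proof -
  have uu: "u < p" "u1 < p" "u2 < p" "v < q" "v1 < q" "v2 < q" using a1 a2 unfolding adjc_def by auto
  have q1: "q - 1 \<noteq> 0" using q by arith
  have p1: "p \<ge> 1" using p by simp
  have T: "\<And>w x. adjc p q (u,v) (w,x) \<Longrightarrow> x = v \<or> (w = u \<and> x = Suc v) \<or> (w = u \<and> v = Suc x)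
      \<or> (w = u \<and> v = 0 \<and> x = q - 1) \<or> (w = u \<and> x = 0 \<and> v = q - 1)"
    unfolding adjc_def by auto
  have PK: "\<And>w. pg p q (u,v) (w,v) = kp p q v u w" using pg_K .
  have PU: "pg p q (u,v) (u,Suc v) = Suc p - (v mod 2)" using pg_B .
  have PD: "\<And>x. v = Suc x \<Longrightarrow> pg p q (u,v) (u,x) = Suc p - (x mod 2)"
    using pg_B[of p q u _ u] pg_sym[of p q "(u,v)"] by simp
  have PW1: "v = 0 \<Longrightarrow> pg p q (u,v) (u,q - 1) = u" using pg_W[OF q] by simp
  have PW2: "v = q - 1 \<Longrightarrow> pg p q (u,v) (u,0) = u"
    using pg_W[OF q, of p u u] pg_sym[of p q "(u,v)" "(u,0)"] by simp
  have Kne: "\<And>w x. adjc p q (u,v) (w,x) \<Longrightarrow> x = v \<Longrightarrow> pg p q (u,v) (w,x) = kp p q v u w"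
    using PK by simp
  have NB: "\<And>x. v = Suc x \<Longrightarrow> Suc p - (x mod 2) \<ge> p" by simp
  define P where "P = (\<lambda>w x. pg p q (u,v) (w,x))"
  have C: "\<And>w x. adjc p q (u,v) (w,x) \<Longrightarrow>
     (x = v \<and> P w x = kp p q v u w) \<or>
     (w = u \<and> x = Suc v \<and> P w x = Suc p - (v mod 2)) \<or>
     (w = u \<and> v = Suc x \<and> P w x = Suc p - (x mod 2)) \<or>
     (w = u \<and> (v = 0 \<or> v = q - 1) \<and> x \<noteq> v \<and> x \<noteq> Suc v \<and> v \<noteq> Suc x \<and> P w x = u
        \<and> (v = 0 \<longrightarrow> x = q - 1) \<and> (v = q - 1 \<longrightarrow> x = 0))"
  proof -
    fix w x assume a: "adjc p q (u,v) (w,x)"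
    show "?thesis w x"
    proof (cases "x = v")
      case True thus ?thesis using PK unfolding P_def by simp
    next
      case xv: False
      show ?thesis
      proof (cases "x = Suc v")
        case True thus ?thesis using T[OF a] PU xv unfolding P_def by auto
      next
        case xs: False
        show ?thesis
        proof (cases "v = Suc x")
          case True thus ?thesis using T[OF a] PD xv xs unfolding P_def by auto
        next
          case False
          hence "w = u \<and> ((v = 0 \<and> x = q - 1) \<or> (x = 0 \<and> v = q - 1))" using T[OF a] xv xs by auto
          thus ?thesis using PW1 PW2 xv xs False q1 unfolding P_def by auto
        qed
      qed
    qed
  qed
  have pe': "P u1 v1 = P u2 v2" using pe unfolding P_def .
  note c1 = C[OF a1] and c2 = C[OF a2]
  have F1: "\<And>w. Suc v < q \<Longrightarrow> kp p q v u w \<noteq> Suc p - (v mod 2)"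
    using cross_KB[OF p1] by metis
  have F2: "\<And>w x. v = Suc x \<Longrightarrow> kp p q v u w \<noteq> Suc p - (x mod 2)"
    using cross_BK[OF p1] uu(4) by metis
  have F3: "\<And>w. w < p \<Longrightarrow> v = 0 \<or> v = q - 1 \<Longrightarrow> kp p q v u w \<noteq> u"
    using match_KW uu(1) by metis
  have F4: "\<And>x. v = Suc x \<Longrightarrow> Suc p - (v mod 2) \<noteq> Suc p - (x mod 2)"
    by (simp add: mod2_eq_if)
  have F5: "\<And>x. Suc p - (x mod 2) \<noteq> u" using uu(1) by (simp add: mod2_eq_if)
  have F6: "\<And>w w'. w < p \<Longrightarrow> w' < p \<Longrightarrow> kp p q v u w = kp p q v u w' \<Longrightarrow> w = w'"
    using match_KK uu(1) by metis
  show ?thesis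
  proof -
    { assume h1: "v1 = v \<and> P u1 v1 = kp p q v u u1"
      { assume h2: "v2 = v \<and> P u2 v2 = kp p q v u u2"
        have ?thesis using F6[of u1 u2] h1 h2 pe' uu by simp }
      moreover
      { assume h2: "u2 = u \<and> v2 = Suc v \<and> P u2 v2 = Suc p - (v mod 2)"
        have ?thesis using F1[of u1] h1 h2 pe' uu by simp }
      moreover
      { assume h2: "u2 = u \<and> v = Suc v2 \<and> P u2 v2 = Suc p - (v2 mod 2)"
        have ?thesis using F2[of v2 u1] h1 h2 pe' by metis }
      moreover
      { assume h2: "u2 = u \<and> (v = 0 \<or> v = q - 1) \<and> v2 \<noteq> v \<and> v2 \<noteq> Suc v \<and> v \<noteq> Suc v2 \<and> P u2 v2 = u \<and> (v = 0 \<longrightarrow> v2 = q - 1) \<and> (v = q - 1 \<longrightarrow> v2 = 0)"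
        have ?thesis using F3[of u1] h1 h2 pe' uu by simp }
      ultimately have ?thesis using c2 by blast }
    moreover
    { assume h1: "u1 = u \<and> v1 = Suc v \<and> P u1 v1 = Suc p - (v mod 2)"
      { assume h2: "v2 = v \<and> P u2 v2 = kp p q v u u2"
        have ?thesis using F1[of u2] h1 h2 pe' uu by simp }
      moreover
      { assume h2: "u2 = u \<and> v2 = Suc v \<and> P u2 v2 = Suc p - (v mod 2)"
        have ?thesis using h1 h2 by simp }
      moreover
      { assume h2: "u2 = u \<and> v = Suc v2 \<and> P u2 v2 = Suc p - (v2 mod 2)"
        have ?thesis using F4[of v2] h1 h2 pe' by metis }
      moreover
      { assume h2: "u2 = u \<and> (v = 0 \<or> v = q - 1) \<and> v2 \<noteq> v \<and> v2 \<noteq> Suc v \<and> v \<noteq> Suc v2 \<and> P u2 v2 = u \<and> (v = 0 \<longrightarrow> v2 = q - 1) \<and> (v = q - 1 \<longrightarrow> v2 = 0)"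
        have ?thesis using F5[of v] h1 h2 pe' by simp }
      ultimately have ?thesis using c2 by blast }
    moreover
    { assume h1: "u1 = u \<and> v = Suc v1 \<and> P u1 v1 = Suc p - (v1 mod 2)"
      { assume h2: "v2 = v \<and> P u2 v2 = kp p q v u u2"
        have ?thesis using F2[of v1 u2] h1 h2 pe' by metis }
      moreover
      { assume h2: "u2 = u \<and> v2 = Suc v \<and> P u2 v2 = Suc p - (v mod 2)"
        have ?thesis using F4[of v1] h1 h2 pe' by metis }
      moreover
      { assume h2: "u2 = u \<and> v = Suc v2 \<and> P u2 v2 = Suc p - (v2 mod 2)"
        have ?thesis using h1 h2 by simp }
      moreover
      { assume h2: "u2 = u \<and> (v = 0 \<or> v = q - 1) \<and> v2 \<noteq> v \<and> v2 \<noteq> Suc v \<and> v \<noteq> Suc v2 \<and> P u2 v2 = u \<and> (v = 0 \<longrightarrow> v2 = q - 1) \<and> (v = q - 1 \<longrightarrow> v2 = 0)"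
        have ?thesis using F5[of v1] h1 h2 pe' by simp }
      ultimately have ?thesis using c2 by blast }
    moreover
    { assume h1: "u1 = u \<and> (v = 0 \<or> v = q - 1) \<and> v1 \<noteq> v \<and> v1 \<noteq> Suc v \<and> v \<noteq> Suc v1 \<and> P u1 v1 = u \<and> (v = 0 \<longrightarrow> v1 = q - 1) \<and> (v = q - 1 \<longrightarrow> v1 = 0)"
      { assume h2: "v2 = v \<and> P u2 v2 = kp p q v u u2"
        have ?thesis using F3[of u2] h1 h2 pe' uu by simp }
      moreover
      { assume h2: "u2 = u \<and> v2 = Suc v \<and> P u2 v2 = Suc p - (v mod 2)"
        have ?thesis using F5[of v] h1 h2 pe' by simp }
      moreover
      { assume h2: "u2 = u \<and> v = Suc v2 \<and> P u2 v2 = Suc p - (v2 mod 2)"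
        have ?thesis using F5[of v2] h1 h2 pe' by simp }
      moreover
      { assume h2: "u2 = u \<and> (v = 0 \<or> v = q - 1) \<and> v2 \<noteq> v \<and> v2 \<noteq> Suc v \<and> v \<noteq> Suc v2 \<and> P u2 v2 = u \<and> (v = 0 \<longrightarrow> v2 = q - 1) \<and> (v = q - 1 \<longrightarrow> v2 = 0)"
        have ?thesis using h1 h2 q1 by auto }
      ultimately have ?thesis using c2 by blast }
    ultimately show ?thesis using c1 by blast
  qed
qed




definition pageS :: "(nat \<times> nat \<Rightarrow> nat \<times> nat \<Rightarrow> nat) \<Rightarrow> (nat \<times> nat) set \<Rightarrow> nat" where
  "pageS f e = f (fst (SOME ab. e = {fst ab, snd ab})) (snd (SOME ab. e = {fst ab, snd ab}))"

lemma pageS_eq: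
  assumes sym: "\<And>x y. f x y = f y x"
  shows "pageS f {a,b} = f a b"
proof -
  have ex: "\<exists>ab. {a,b} = {fst ab, snd ab}" by (rule exI[of _ "(a,b)"]) simp
  define ab where "ab = (SOME ab. {a,b} = {fst ab, snd ab})"
  have "{a,b} = {fst ab, snd ab}" unfolding ab_def using someI_ex[OF ex] .
  hence "(fst ab = a \<and> snd ab = b) \<or> (fst ab = b \<and> snd ab = a)" by (auto simp: doubleton_eq_iff)
  hence "f (fst ab) (snd ab) = f a b" using sym by metis
  thus ?thesis unfolding pageS_def ab_def .
qed

lemma edge_at:
  assumes q: "q \<ge> 3" and e: "e \<in> edges (GG p q)" and x: "x \<in> e"
  shows "\<exists>y. e = {x,y} \<and> adjc p q x y"
proof -
  obtain a b where ab: "e = {a,b}" "adjc p q a b" using e unfolding edgesG[OF q] by auto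
  show ?thesis
  proof (cases "x = a")
    case True thus ?thesis using ab by blast
  next
    case False hence "x = b" using ab x by auto
    hence "e = {x,a}" "adjc p q x a" using ab adjc_sym[OF ab(2)] by (auto simp: insert_commute)
    thus ?thesis by blast
  qed
qed

lemma mbeG:
  assumes p: "p \<ge> 3" and q: "q \<ge> 3"
  shows "matching_book_embedding (GG p q) (p + 2) (ordf p) (pageS (pg p q))"
proof -
  have PS: "\<And>a b. pageS (pg p q) {a,b} = pg p q a b" using pageS_eq pg_sym by metis
  have inj: "inj_on (ordf p) (verts (GG p q))"
  proof (rule inj_onI)
    fix x y assume xy: "x \<in> verts (GG p q)" "y \<in> verts (GG p q)" "ordf p x = ordf p y"
    obtain u v u' v' where xx: "x = (u,v)" "y = (u',v')" "u < p" "u' < p"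
      using xy unfolding vertsG by auto
    have "\<not> ordf p x < ordf p y" "\<not> ordf p y < ordf p x" using xy by auto
    hence "v = v'" "sp p v u = sp p v u'" using ord_less[OF xx(3,4), of v v'] ord_less[OF xx(4,3), of v' v]
      unfolding xx by auto
    thus "x = y" using sp_inj[OF xx(3,4)] xx by auto
  qed
  have pk: "\<forall>e\<in>edges (GG p q). pageS (pg p q) e < p + 2"
  proof
    fix e assume "e \<in> edges (GG p q)"
    then obtain a b where ab: "e = {a,b}" "adjc p q a b" unfolding edgesG[OF q] by auto
    have hp: "(fst a + fst b) mod p < p" using p by simp
    have "pg p q a b < p + 2"
      using ab(2) p hp unfolding pg_def kp_def adjc_def by (auto simp: mod_less_divisor less_Suc_eq_le intro: le_SucI mod_le_divisor)
    thus "pageS (pg p q) e < p + 2" using ab PS by simp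
  qed
  have nc: "\<forall>e\<in>edges (GG p q). \<forall>f\<in>edges (GG p q). pageS (pg p q) e = pageS (pg p q) f \<longrightarrow> \<not> crossing (ordf p) e f"
  proof (intro ballI impI notI)
    fix e f assume e: "e \<in> edges (GG p q)" and f: "f \<in> edges (GG p q)"
      and pe: "pageS (pg p q) e = pageS (pg p q) f" and cr: "crossing (ordf p) e f"
    obtain a b c d where abcd: "e = {a,b}" "f = {c,d}" "ordf p a < ordf p c" "ordf p c < ordf p b"
      "ordf p b < ordf p d" using cr unfolding crossing_def by blast
    have ae: "a \<in> e" "c \<in> f" using abcd by auto
    obtain y where y: "e = {a,y}" "adjc p q a y" using edge_at[OF q e ae(1)] by blast
    have "y = b" using y abcd abcd(3,4) by (auto simp: doubleton_eq_iff)
    hence ab: "adjc p q a b" using y by simp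
    obtain z where z: "f = {c,z}" "adjc p q c z" using edge_at[OF q f ae(2)] by blast
    have "z = d" using z abcd by (auto simp: doubleton_eq_iff)
    hence cd: "adjc p q c d" using z by simp
    have pe2: "pg p q a b = pg p q c d" using pe abcd PS by simp
    show False
      using cross_free[OF p q, of "fst a" "snd a" "fst b" "snd b" "fst c" "snd c" "fst d" "snd d"]
        ab cd pe2 abcd by simp
  qed
  have mt: "\<forall>e\<in>edges (GG p q). \<forall>f\<in>edges (GG p q). pageS (pg p q) e = pageS (pg p q) f \<longrightarrow> e \<noteq> f \<longrightarrow> e \<inter> f = {}"
  proof (intro ballI impI)
    fix e f assume e: "e \<in> edges (GG p q)" and f: "f \<in> edges (GG p q)"
      and pe: "pageS (pg p q) e = pageS (pg p q) f" and ne: "e \<noteq> f"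
    show "e \<inter> f = {}"
    proof (rule ccontr)
      assume "e \<inter> f \<noteq> {}"
      then obtain x where x: "x \<in> e" "x \<in> f" by auto
      obtain y where y: "e = {x,y}" "adjc p q x y" using edge_at[OF q e x(1)] by auto
      obtain z where z: "f = {x,z}" "adjc p q x z" using edge_at[OF q f x(2)] by auto
      have "pg p q x y = pg p q x z" using pe y z PS by simp
      hence "y = z" using matching[OF p q, of "fst x" "snd x" "fst y" "snd y" "fst z" "snd z"] y z by simp
      thus False using ne y z by simp
    qed
  qed
  show ?thesis unfolding matching_book_embedding_def using inj pk nc mt by blast
qed

theorem mainTheorem1:
  fixes p q :: nat
  assumes "p \<ge> 3" and "q \<ge> 3"
  shows "mbt (cart_prod (complete_graph p) (cycle_graph q))
           = max_degree (cart_prod (complete_graph p) (cycle_graph q)) + 1"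
proof -
  have "mbt (GG p q) = p + 2" unfolding mbt_def
  proof (rule Least_equality)
    show "\<exists>ord page. matching_book_embedding (GG p q) (p + 2) ord page"
      using mbeG[OF assms] by blast
    fix k assume "\<exists>ord page. matching_book_embedding (GG p q) k ord page"
    thus "p + 2 \<le> k" using lowerG[OF assms(2) assms(1)] by blast
  qed
  moreover have "max_degree (GG p q) = p + 1" using maxdegG[OF assms(2)] assms(1) by simp
  ultimately show ?thesis by simp
qed


end
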